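(* Let $m\ge3$. The Terwilliger algebra $T=T(x_0)$ of the doubled Odd graph $2.O_{m+1}$ coincides with the centralizer algebra $\mathcal{A}$ of the stabilizer of $x_0$ in $\mathrm{Aut}(2.O_{m+1})$.
   Context: $S=\{1,\dots,2m+1\}$, $X=\binom{S}{m}\cup\binom{S}{m+1}$; the doubled Odd graph $2.O_{m+1}$ has vertex set $X$, two vertices adjacent iff one is a proper subset of the other, with distance $\partial$. $x_0=\{1,\dots,m\}$. $T$ is the subalgebra of complex $X\times X$ matrices generated by the adjacency matrix $A_1$ and the diagonal matrices $E^*_i$ ($0\le i\le 2m+1$) with $(y,y)$-entry $1$ iff $\partial(x_0,y)=i$. The stabilizer of $x_0$ in $\mathrm{Aut}(2.O_{m+1})$ is $G=\mathrm{Sym}(x_0)\times\mathrm{Sym}(S\setminus x_0)$ acting naturally on $X$; $\mathcal{A}$ is the set of complex $X\times X$ matrices $B$ with $B_{\sigma(y),\sigma(z)}=B_{y,z}$ for all $\sigma\in G$, $y,z\in X$. *)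

theory Defs
  imports Complex_Main "HOL-Combinatorics.Permutations"
begin

definition S_set :: "nat \<Rightarrow> nat set" where
  "S_set m = {1..2*m+1}"

definition X_set :: "nat \<Rightarrow> nat set set" where
  "X_set m = {y. y \<subseteq> S_set m \<and> (card y = m \<or> card y = m + 1)}"

definition x0 :: "nat \<Rightarrow> nat set" where
  "x0 m = {1..m}"

definition adj :: "nat \<Rightarrow> nat set \<Rightarrow> nat set \<Rightarrow> bool" where
  "adj m y z \<longleftrightarrow> y \<in> X_set m \<and> z \<in> X_set m \<and> (y \<subset> z \<or> z \<subset> y)"

inductive walk :: "nat \<Rightarrow> nat \<Rightarrow> nat set \<Rightarrow> nat set \<Rightarrow> bool" for m where
  walk0: "y \<in> X_set m \<Longrightarrow> walk m 0 y y"
| walkS: "adj m y w \<Longrightarrow> walk m n w z \<Longrightarrow> walk m (Suc n) y z"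

definition dist_O :: "nat \<Rightarrow> nat set \<Rightarrow> nat set \<Rightarrow> nat" where
  "dist_O m y z = (LEAST n. walk m n y z)"

text \<open>Complex X x X matrices are represented as functions vanishing outside X x X.\<close>
type_synonym cmat = "nat set \<Rightarrow> nat set \<Rightarrow> complex"

definition is_mat :: "nat \<Rightarrow> cmat \<Rightarrow> bool" where
  "is_mat m B \<longleftrightarrow> (\<forall>y z. (y \<notin> X_set m \<or> z \<notin> X_set m) \<longrightarrow> B y z = 0)"

definition mat_add :: "cmat \<Rightarrow> cmat \<Rightarrow> cmat" where
  "mat_add B C = (\<lambda>y z. B y z + C y z)"

definition mat_smult :: "complex \<Rightarrow> cmat \<Rightarrow> cmat" where
  "mat_smult c B = (\<lambda>y z. c * B y z)"

definition mat_mult :: "nat \<Rightarrow> cmat \<Rightarrow> cmat \<Rightarrow> cmat" where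
  "mat_mult m B C = (\<lambda>y z. if y \<in> X_set m \<and> z \<in> X_set m
      then \<Sum>w\<in>X_set m. B y w * C w z else 0)"

definition mat_one :: "nat \<Rightarrow> cmat" where
  "mat_one m = (\<lambda>y z. if y \<in> X_set m \<and> y = z then 1 else 0)"

definition adj_mat :: "nat \<Rightarrow> cmat" where
  "adj_mat m = (\<lambda>y z. if adj m y z then 1 else 0)"

definition dual_idem :: "nat \<Rightarrow> nat \<Rightarrow> cmat" where
  "dual_idem m i = (\<lambda>y z. if y \<in> X_set m \<and> y = z \<and> dist_O m (x0 m) y = i then 1 else 0)"

inductive_set terwilliger :: "nat \<Rightarrow> cmat set" for m where
  gen_one: "mat_one m \<in> terwilliger m"
| gen_adj: "adj_mat m \<in> terwilliger m"
| gen_dual: "i \<le> 2*m+1 \<Longrightarrow> dual_idem m i \<in> terwilliger m"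
| cl_add: "B \<in> terwilliger m \<Longrightarrow> C \<in> terwilliger m \<Longrightarrow> mat_add B C \<in> terwilliger m"
| cl_smult: "B \<in> terwilliger m \<Longrightarrow> mat_smult c B \<in> terwilliger m"
| cl_mult: "B \<in> terwilliger m \<Longrightarrow> C \<in> terwilliger m \<Longrightarrow> mat_mult m B C \<in> terwilliger m"

text \<open>The stabilizer G = Sym(x0) x Sym(S - x0), as permutations of S fixing x0 setwise.\<close>
definition stab :: "nat \<Rightarrow> (nat \<Rightarrow> nat) set" where
  "stab m = {\<sigma>. \<sigma> permutes S_set m \<and> \<sigma> ` x0 m = x0 m}"

definition centralizer :: "nat \<Rightarrow> cmat set" where
  "centralizer m = {B. is_mat m B \<and>
     (\<forall>\<sigma>\<in>stab m. \<forall>y\<in>X_set m. \<forall>z\<in>X_set m. B (\<sigma> ` y) (\<sigma> ` z) = B y z)}"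

end

theory Submission
  imports Defs
begin

definition sd :: "'a set \<Rightarrow> 'a set \<Rightarrow> 'a set" where
  "sd u v = (u - v) \<union> (v - u)"

lemma finite_S[simp]: "finite (S_set m)" by (simp add: S_set_def)
lemma card_S: "card (S_set m) = 2*m+1" by (simp add: S_set_def)
lemma x0_sub: "x0 m \<subseteq> S_set m" by (auto simp: x0_def S_set_def)
lemma card_x0: "card (x0 m) = m" by (simp add: x0_def)
lemma x0_X: "x0 m \<in> X_set m" using x0_sub card_x0 by (auto simp: X_set_def)
lemma X_sub: "y \<in> X_set m \<Longrightarrow> y \<subseteq> S_set m" by (simp add: X_set_def)
lemma X_fin: "y \<in> X_set m \<Longrightarrow> finite y" using finite_subset[OF X_sub finite_S] .
lemma X_card: "y \<in> X_set m \<Longrightarrow> card y = m \<or> card y = m+1" by (simp add: X_set_def)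
lemma finite_X[simp]: "finite (X_set m)"
proof -
  have "X_set m \<subseteq> Pow (S_set m)" by (auto simp: X_set_def)
  moreover have "finite (Pow (S_set m))" by simp
  ultimately show ?thesis by (rule finite_subset)
qed

lemma sd_sym: "sd u v = sd v u" by (auto simp: sd_def)
lemma sd_self: "sd u u = {}" by (auto simp: sd_def)
lemma sd_empty: "sd u v = {} \<longleftrightarrow> u = v" by (auto simp: sd_def)
lemma sd_fin: "finite u \<Longrightarrow> finite v \<Longrightarrow> finite (sd u v)" by (simp add: sd_def)
lemma sd_tri: "sd u v \<subseteq> sd u w \<union> sd w v" by (auto simp: sd_def)

lemma card_sd_tri:
  assumes "finite u" "finite v" "finite w"
  shows "card (sd u v) \<le> card (sd u w) + card (sd w v)"
proof -
  have "card (sd u v) \<le> card (sd u w \<union> sd w v)"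
    by (rule card_mono) (use sd_fin[OF assms(1) assms(3)] sd_fin[OF assms(3) assms(2)] sd_tri[of u v w] in auto)
  also have "\<dots> \<le> card (sd u w) + card (sd w v)" by (rule card_Un_le)
  finally show ?thesis .
qed

lemma adj_sym: "adj m y z = adj m z y" by (auto simp: adj_def)

lemma adj_sd:
  assumes "adj m w z" shows "card (sd w z) = 1"
proof -
  { fix a b assume a: "a \<in> X_set m" "b \<in> X_set m" "a \<subset> b"
    have fa: "finite a" "finite b" using a X_fin by auto
    have "card a < card b" using a fa psubset_card_mono by blast
    hence cb: "card b = card a + 1" using X_card[OF a(1)] X_card[OF a(2)] by auto
    have "sd a b = b - a" using a by (auto simp: sd_def)
    moreover have "card (b - a) = 1" using cb a fa by (simp add: card_Diff_subset)
    ultimately have "card (sd a b) = 1" by simp }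
  note * = this
  have "w \<in> X_set m" "z \<in> X_set m" "w \<subset> z \<or> z \<subset> w" using assms by (auto simp: adj_def)
  thus ?thesis
  proof (elim conjE disjE)
    assume "w \<in> X_set m" "z \<in> X_set m" "w \<subset> z" thus ?thesis using *[of w z] by blast
  next
    assume "w \<in> X_set m" "z \<in> X_set m" "z \<subset> w" thus ?thesis using *[of z w] sd_sym[of w z] by simp
  qed
qed

lemma step_exists:
  assumes "y \<in> X_set m" "z \<in> X_set m" "y \<noteq> z"
  shows "\<exists>w\<in>X_set m. adj m w z \<and> card (sd y w) + 1 = card (sd y z)"
proof (cases "card z = m")
  case True
  have fy: "finite y" "finite z" using assms X_fin by auto
  have "\<not> y \<subseteq> z"
  proof
    assume "y \<subseteq> z"
    moreover have "card y \<ge> card z" using X_card[OF assms(1)] True by auto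
    ultimately show False using card_subset_eq[OF fy(2) \<open>y \<subseteq> z\<close>] card_mono[OF fy(2) \<open>y \<subseteq> z\<close>] assms(3) by simp
  qed
  then obtain e where e: "e \<in> y" "e \<notin> z" by auto
  let ?w = "insert e z"
  have "card ?w = m+1" using True fy e by simp
  moreover have "?w \<subseteq> S_set m" using e X_sub[OF assms(1)] X_sub[OF assms(2)] by blast
  ultimately have wX: "?w \<in> X_set m" unfolding X_set_def by blast
  have "z \<subset> ?w" using e by blast
  hence "adj m ?w z" unfolding adj_def using wX assms(2) by blast
  have e1: "sd y z = insert e (sd y ?w)" and e2: "e \<notin> sd y ?w" using e by (auto simp: sd_def)
  have e3: "finite (sd y ?w)" using fy by (simp add: sd_fin)
  have "card (sd y z) = card (sd y ?w) + 1"
    unfolding e1 using card_insert_disjoint[OF e3 e2] by simp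
  thus ?thesis using wX \<open>adj m ?w z\<close> by (intro bexI[where x="?w"] conjI) simp_all
next
  case False
  hence cz: "card z = m+1" using X_card[OF assms(2)] by auto
  have fy: "finite y" "finite z" using assms X_fin by auto
  have "\<not> z \<subseteq> y"
  proof
    assume "z \<subseteq> y"
    moreover have "card y \<le> card z" using X_card[OF assms(1)] cz by auto
    ultimately show False using card_subset_eq[OF fy(1) \<open>z \<subseteq> y\<close>] card_mono[OF fy(1) \<open>z \<subseteq> y\<close>] assms(3) by simp
  qed
  then obtain e where e: "e \<in> z" "e \<notin> y" by auto
  let ?w = "z - {e}"
  have "card ?w = m" using cz fy e by simp
  moreover have "?w \<subseteq> S_set m" using X_sub[OF assms(2)] by blast
  ultimately have wX: "?w \<in> X_set m" unfolding X_set_def by blast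
  have "?w \<subset> z" using e by blast
  hence "adj m ?w z" unfolding adj_def using wX assms(2) by blast
  have e1: "sd y z = insert e (sd y ?w)" and e2: "e \<notin> sd y ?w" using e by (auto simp: sd_def)
  have e3: "finite (sd y ?w)" using fy by (simp add: sd_fin)
  have "card (sd y z) = card (sd y ?w) + 1"
    unfolding e1 using card_insert_disjoint[OF e3 e2] by simp
  thus ?thesis using wX \<open>adj m ?w z\<close> by (intro bexI[where x="?w"] conjI) simp_all
qed

lemma walk_lower: "walk m n u v \<Longrightarrow> card (sd u v) \<le> n"
proof (induction rule: walk.induct)
  case (walk0 y) thus ?case by (simp add: sd_self)
next
  case (walkS y w n z)
  have X: "y \<in> X_set m" "w \<in> X_set m" using walkS.hyps(1) by (auto simp: adj_def)
  have "walk m n w z" by fact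
  hence zX: "z \<in> X_set m" by (induction rule: walk.induct) auto
  have "card (sd y z) \<le> card (sd y w) + card (sd w z)"
    using card_sd_tri[OF X_fin[OF X(1)] X_fin[OF zX] X_fin[OF X(2)]] .
  thus ?case using adj_sd[OF walkS.hyps(1)] walkS.IH by simp
qed

lemma walk_upper: "u \<in> X_set m \<Longrightarrow> v \<in> X_set m \<Longrightarrow> card (sd u v) = n \<Longrightarrow> walk m n u v"
proof (induction n arbitrary: u)
  case 0
  have "finite (sd u v)" using sd_fin[OF X_fin[OF 0(1)] X_fin[OF 0(2)]] .
  hence "u = v" using 0 sd_empty[of u v] by simp
  thus ?case using 0 walk0 by simp
next
  case (Suc n)
  have "u \<noteq> v" using Suc.prems(3) sd_self[of u] by auto
  then obtain w where w: "w \<in> X_set m" "adj m w u" "card (sd v w) + 1 = card (sd v u)"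
    using step_exists[OF Suc.prems(2) Suc.prems(1)] by auto
  have "card (sd w v) = n" using w(3) Suc.prems(3) sd_sym[of w v] sd_sym[of u v] by simp
  hence "walk m n w v" using Suc.IH w(1) Suc.prems(2) by blast
  moreover have "adj m u w" using w(2) adj_sym[of m u w] by simp
  ultimately show ?case by (rule walkS[rotated])
qed

lemma dist_sd:
  assumes "u \<in> X_set m" "v \<in> X_set m" shows "dist_O m u v = card (sd u v)"
  unfolding dist_O_def
proof (rule Least_equality)
  show "walk m (card (sd u v)) u v" using walk_upper assms by blast
next
  fix n assume "walk m n u v" thus "card (sd u v) \<le> n" by (rule walk_lower)
qed

definition FF :: "nat \<Rightarrow> nat set \<Rightarrow> nat set \<Rightarrow> bool \<times> bool \<times> bool \<Rightarrow> nat" where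
  "FF m y z c = card {x \<in> S_set m. (x \<in> x0 m, x \<in> y, x \<in> z) = c}"

definition GG :: "nat \<Rightarrow> nat set \<Rightarrow> bool \<times> bool \<Rightarrow> nat" where
  "GG m y c = card {x \<in> S_set m. (x \<in> x0 m, x \<in> y) = c}"

lemma card_split:
  assumes "finite S"
  shows "card {x\<in>S. P x} = card {x\<in>S. P x \<and> Q x} + card {x\<in>S. P x \<and> \<not> Q x}"
proof -
  have "{x\<in>S. P x} = {x\<in>S. P x \<and> Q x} \<union> {x\<in>S. P x \<and> \<not> Q x}" by blast
  moreover have "finite {x\<in>S. P x \<and> Q x}" "finite {x\<in>S. P x \<and> \<not> Q x}" using assms by simp_all
  moreover have "{x\<in>S. P x \<and> Q x} \<inter> {x\<in>S. P x \<and> \<not> Q x} = {}" by blast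
  ultimately show ?thesis by (simp add: card_Un_disjoint)
qed

lemma FG1: "FF m y z (c0,c1,True) + FF m y z (c0,c1,False) = GG m y (c0,c1)"
proof -
  have "GG m y (c0,c1) = card {x\<in>S_set m. (x \<in> x0 m, x \<in> y) = (c0,c1) \<and> x \<in> z}
      + card {x\<in>S_set m. (x \<in> x0 m, x \<in> y) = (c0,c1) \<and> x \<notin> z}"
    unfolding GG_def by (rule card_split) simp
  moreover have "{x\<in>S_set m. (x \<in> x0 m, x \<in> y) = (c0,c1) \<and> x \<in> z}
     = {x \<in> S_set m. (x \<in> x0 m, x \<in> y, x \<in> z) = (c0,c1,True)}" by auto
  moreover have "{x\<in>S_set m. (x \<in> x0 m, x \<in> y) = (c0,c1) \<and> x \<notin> z}
     = {x \<in> S_set m. (x \<in> x0 m, x \<in> y, x \<in> z) = (c0,c1,False)}" by auto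
  ultimately show ?thesis unfolding FF_def by simp
qed

lemma FG2: "FF m y z (c0,True,c2) + FF m y z (c0,False,c2) = GG m z (c0,c2)"
proof -
  have "GG m z (c0,c2) = card {x\<in>S_set m. (x \<in> x0 m, x \<in> z) = (c0,c2) \<and> x \<in> y}
      + card {x\<in>S_set m. (x \<in> x0 m, x \<in> z) = (c0,c2) \<and> x \<notin> y}"
    unfolding GG_def by (rule card_split) simp
  moreover have "{x\<in>S_set m. (x \<in> x0 m, x \<in> z) = (c0,c2) \<and> x \<in> y}
     = {x \<in> S_set m. (x \<in> x0 m, x \<in> y, x \<in> z) = (c0,True,c2)}" by auto
  moreover have "{x\<in>S_set m. (x \<in> x0 m, x \<in> z) = (c0,c2) \<and> x \<notin> y}
     = {x \<in> S_set m. (x \<in> x0 m, x \<in> y, x \<in> z) = (c0,False,c2)}" by auto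
  ultimately show ?thesis unfolding FF_def by simp
qed

lemma Gx: "GG m y (True,True) + GG m y (True,False) = m"
proof -
  have "{x\<in>S_set m. x \<in> x0 m} = x0 m" using x0_sub by blast
  thus ?thesis unfolding GG_def
    using card_split[of "S_set m" "\<lambda>x. x \<in> x0 m" "\<lambda>x. x \<in> y"] card_x0[of m] by simp
qed

lemma card_compl: "card (S_set m - x0 m) = m + 1"
  using card_Diff_subset[OF _ x0_sub] card_S card_x0 by (simp add: x0_def)

lemma Gc: "GG m y (False,True) + GG m y (False,False) = m + 1"
proof -
  have "{x\<in>S_set m. x \<notin> x0 m} = S_set m - x0 m" by blast
  thus ?thesis unfolding GG_def
    using card_split[of "S_set m" "\<lambda>x. x \<notin> x0 m" "\<lambda>x. x \<in> y"] card_compl[of m] by simp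
qed

lemma Gcard: assumes "y \<subseteq> S_set m" shows "card y = GG m y (True,True) + GG m y (False,True)"
proof -
  have "{x\<in>S_set m. x \<in> y} = y" using assms by blast
  moreover have "{x\<in>S_set m. x \<in> y \<and> x \<in> x0 m} = {x\<in>S_set m. x \<in> x0 m \<and> x \<in> y}" by blast
  moreover have "{x\<in>S_set m. x \<in> y \<and> x \<notin> x0 m} = {x\<in>S_set m. x \<notin> x0 m \<and> x \<in> y}" by blast
  ultimately show ?thesis unfolding GG_def
    using card_split[of "S_set m" "\<lambda>x. x \<in> y" "\<lambda>x. x \<in> x0 m"] by simp
qed

lemma Gdist: assumes "y \<subseteq> S_set m" shows "card (sd (x0 m) y) = GG m y (True,False) + GG m y (False,True)"
proof -
  have "{x\<in>S_set m. x \<in> sd (x0 m) y} = sd (x0 m) y" using assms x0_sub[of m] by (auto simp: sd_def)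
  moreover have "{x\<in>S_set m. x \<in> sd (x0 m) y \<and> x \<in> x0 m} = {x\<in>S_set m. x \<in> x0 m \<and> x \<notin> y}" by (auto simp: sd_def)
  moreover have "{x\<in>S_set m. x \<in> sd (x0 m) y \<and> x \<notin> x0 m} = {x\<in>S_set m. x \<notin> x0 m \<and> x \<in> y}" by (auto simp: sd_def)
  ultimately show ?thesis unfolding GG_def
    using card_split[of "S_set m" "\<lambda>x. x \<in> sd (x0 m) y" "\<lambda>x. x \<in> x0 m"] by simp
qed

lemma Fsd: assumes "y \<subseteq> S_set m" "z \<subseteq> S_set m"
  shows "card (sd y z) = FF m y z (True,True,False) + FF m y z (True,False,True)
     + FF m y z (False,True,False) + FF m y z (False,False,True)"
proof -
  let ?A = "\<lambda>x. x \<in> sd y z"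
  have 1: "card {x\<in>S_set m. ?A x} = card {x\<in>S_set m. ?A x \<and> x \<in> x0 m}
      + card {x\<in>S_set m. ?A x \<and> x \<notin> x0 m}" by (rule card_split) simp
  have 2: "card {x\<in>S_set m. ?A x \<and> x \<in> x0 m} = card {x\<in>S_set m. (?A x \<and> x \<in> x0 m) \<and> x \<in> y}
      + card {x\<in>S_set m. (?A x \<and> x \<in> x0 m) \<and> x \<notin> y}" by (rule card_split) simp
  have 3: "card {x\<in>S_set m. ?A x \<and> x \<notin> x0 m} = card {x\<in>S_set m. (?A x \<and> x \<notin> x0 m) \<and> x \<in> y}
      + card {x\<in>S_set m. (?A x \<and> x \<notin> x0 m) \<and> x \<notin> y}" by (rule card_split) simp
  have e0: "{x\<in>S_set m. ?A x} = sd y z" using assms by (auto simp: sd_def)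
  have e1: "{x\<in>S_set m. (?A x \<and> x \<in> x0 m) \<and> x \<in> y} = {x \<in> S_set m. (x \<in> x0 m, x \<in> y, x \<in> z) = (True,True,False)}"
    by (auto simp: sd_def)
  have e2: "{x\<in>S_set m. (?A x \<and> x \<in> x0 m) \<and> x \<notin> y} = {x \<in> S_set m. (x \<in> x0 m, x \<in> y, x \<in> z) = (True,False,True)}"
    by (auto simp: sd_def)
  have e3: "{x\<in>S_set m. (?A x \<and> x \<notin> x0 m) \<and> x \<in> y} = {x \<in> S_set m. (x \<in> x0 m, x \<in> y, x \<in> z) = (False,True,False)}"
    by (auto simp: sd_def)
  have e4: "{x\<in>S_set m. (?A x \<and> x \<notin> x0 m) \<and> x \<notin> y} = {x \<in> S_set m. (x \<in> x0 m, x \<in> y, x \<in> z) = (False,False,True)}"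
    by (auto simp: sd_def)
  show ?thesis using 1 2 3 unfolding e0 e1 e2 e3 e4 FF_def by simp
qed

lemma Fdiag: "FF m y y (c0,c1,c2) = (if c1 = c2 then GG m y (c0,c1) else 0)"
proof (cases "c1 = c2")
  case True
  have "{x \<in> S_set m. (x \<in> x0 m, x \<in> y, x \<in> y) = (c0,c1,c2)} = {x \<in> S_set m. (x \<in> x0 m, x \<in> y) = (c0,c1)}"
    using True by auto
  thus ?thesis using True unfolding FF_def GG_def by simp
next
  case False
  have "{x \<in> S_set m. (x \<in> x0 m, x \<in> y, x \<in> y) = (c0,c1,c2)} = {}"
    using False by auto
  thus ?thesis using False unfolding FF_def by simp
qed

lemma dist_x0: "y \<in> X_set m \<Longrightarrow> dist_O m (x0 m) y = GG m y (True,False) + GG m y (False,True)"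
  using dist_sd[OF x0_X] Gdist[OF X_sub] by simp

lemma G_all: "(\<forall>c. GG m y c = GG m y' c) \<longleftrightarrow>
   GG m y (True,True) = GG m y' (True,True) \<and> GG m y (False,True) = GG m y' (False,True)"
proof
  assume h: "GG m y (True,True) = GG m y' (True,True) \<and> GG m y (False,True) = GG m y' (False,True)"
  show "\<forall>c. GG m y c = GG m y' c"
  proof
    fix c :: "bool \<times> bool"
    obtain c0 c1 where c: "c = (c0,c1)" by (cases c)
    show "GG m y c = GG m y' c" unfolding c
      using h Gx[of m y] Gx[of m y'] Gc[of m y] Gc[of m y'] by (cases c0; cases c1) auto
  qed
qed auto

lemma lev_eq:
  assumes "y \<in> X_set m" "y' \<in> X_set m" "dist_O m (x0 m) y = dist_O m (x0 m) y'"
  shows "GG m y c = GG m y' c"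
proof -
  have d: "GG m y (True,False) + GG m y (False,True) = GG m y' (True,False) + GG m y' (False,True)"
    using assms dist_x0 by metis
  have "GG m y (True,True) = GG m y' (True,True) \<and> GG m y (False,True) = GG m y' (False,True)"
    using d Gx[of m y] Gx[of m y'] Gcard[OF X_sub[OF assms(1)]] Gcard[OF X_sub[OF assms(2)]]
      X_card[OF assms(1)] X_card[OF assms(2)] by linarith
  thus ?thesis using G_all by blast
qed

lemma color_perm:
  fixes f g :: "'a \<Rightarrow> 'c"
  assumes fin: "finite S" and eq: "\<And>c. card {x\<in>S. f x = c} = card {x\<in>S. g x = c}"
  shows "\<exists>\<sigma>. \<sigma> permutes S \<and> (\<forall>x\<in>S. g (\<sigma> x) = f x)"
proof -
  have "\<forall>c. \<exists>h. bij_betw h {x\<in>S. f x = c} {x\<in>S. g x = c}"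
  proof
    fix c
    show "\<exists>h. bij_betw h {x\<in>S. f x = c} {x\<in>S. g x = c}"
      by (rule finite_same_card_bij) (use fin eq[of c] in simp_all)
  qed
  then obtain h where h: "\<And>c. bij_betw (h c) {x\<in>S. f x = c} {x\<in>S. g x = c}" by metis
  define \<sigma> where "\<sigma> x = (if x\<in>S then h (f x) x else x)" for x
  have img: "\<sigma> x \<in> S \<and> g (\<sigma> x) = f x" if "x \<in> S" for x
  proof -
    have "h (f x) x \<in> {x'\<in>S. g x' = f x}"
      by (rule bij_betw_apply[OF h[of "f x"]]) (use that in simp)
    thus ?thesis using that by (simp add: \<sigma>_def)
  qed
  have inj: "inj_on \<sigma> S"
  proof (rule inj_onI)
    fix x1 x2 assume x: "x1 \<in> S" "x2 \<in> S" "\<sigma> x1 = \<sigma> x2"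
    have fe: "f x1 = f x2" using img[OF x(1)] img[OF x(2)] x(3) by simp
    have "h (f x1) x1 = h (f x1) x2" using x fe by (simp add: \<sigma>_def)
    moreover have "inj_on (h (f x1)) {x\<in>S. f x = f x1}" using h bij_betw_imp_inj_on by blast
    ultimately show "x1 = x2" using x fe by (auto dest: inj_onD)
  qed
  have sur: "\<sigma> ` S = S"
  proof
    show "\<sigma> ` S \<subseteq> S" using img by blast
    show "S \<subseteq> \<sigma> ` S"
    proof
      fix w assume w: "w \<in> S"
      have "w \<in> h (g w) ` {x\<in>S. f x = g w}"
        using bij_betw_imp_surj_on[OF h[of "g w"]] w by blast
      then obtain x where x: "x \<in> S" "f x = g w" "w = h (g w) x" by blast
      hence "\<sigma> x = w" by (simp add: \<sigma>_def)
      thus "w \<in> \<sigma> ` S" using x by blast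
    qed
  qed
  have "\<sigma> permutes S"
    by (rule bij_imp_permutes) (use inj sur in \<open>auto simp: bij_betw_def \<sigma>_def\<close>)
  thus ?thesis using img by blast
qed

lemma perm_img_eq:
  assumes p: "\<sigma> permutes S" and A: "A \<subseteq> S" and B: "B \<subseteq> S"
    and h: "\<forall>x\<in>S. (\<sigma> x \<in> B \<longleftrightarrow> x \<in> A)"
  shows "\<sigma> ` A = B"
proof
  show "\<sigma> ` A \<subseteq> B" using A h by blast
  show "B \<subseteq> \<sigma> ` A"
  proof
    fix b assume b: "b \<in> B"
    have "b \<in> \<sigma> ` S" using permutes_image[OF p] b B by blast
    then obtain x where "x \<in> S" "b = \<sigma> x" by blast
    thus "b \<in> \<sigma> ` A" using h b by blast
  qed
qed

lemma orbit:
  assumes y: "y \<subseteq> S_set m" and z: "z \<subseteq> S_set m" and y': "y' \<subseteq> S_set m" and z': "z' \<subseteq> S_set m"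
    and F: "FF m y z = FF m y' z'"
  shows "\<exists>\<sigma>\<in>stab m. \<sigma> ` y = y' \<and> \<sigma> ` z = z'"
proof -
  have "\<exists>\<sigma>. \<sigma> permutes S_set m \<and> (\<forall>x\<in>S_set m. (\<sigma> x \<in> x0 m, \<sigma> x \<in> y', \<sigma> x \<in> z') = (x \<in> x0 m, x \<in> y, x \<in> z))"
  proof (rule color_perm)
    fix c
    show "card {x \<in> S_set m. (x \<in> x0 m, x \<in> y, x \<in> z) = c} = card {x \<in> S_set m. (x \<in> x0 m, x \<in> y', x \<in> z') = c}"
      using fun_cong[OF F, of c] unfolding FF_def .
  qed simp
  then obtain \<sigma> where s: "\<sigma> permutes S_set m"
    and h: "\<forall>x\<in>S_set m. (\<sigma> x \<in> x0 m, \<sigma> x \<in> y', \<sigma> x \<in> z') = (x \<in> x0 m, x \<in> y, x \<in> z)" by blast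
  have "\<sigma> ` x0 m = x0 m" by (rule perm_img_eq[OF s x0_sub x0_sub]) (use h in simp)
  moreover have "\<sigma> ` y = y'" by (rule perm_img_eq[OF s y y']) (use h in simp)
  moreover have "\<sigma> ` z = z'" by (rule perm_img_eq[OF s z z']) (use h in simp)
  ultimately show ?thesis using s unfolding stab_def by blast
qed

lemma stab_perm: "\<sigma> \<in> stab m \<Longrightarrow> \<sigma> permutes S_set m" by (simp add: stab_def)
lemma stab_x0: "\<sigma> \<in> stab m \<Longrightarrow> \<sigma> ` x0 m = x0 m" by (simp add: stab_def)
lemma stab_inj: "\<sigma> \<in> stab m \<Longrightarrow> inj \<sigma>" using permutes_inj stab_perm by blast

lemma stab_X: assumes s: "\<sigma> \<in> stab m" and y: "y \<in> X_set m" shows "\<sigma> ` y \<in> X_set m"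
proof -
  have "\<sigma> ` y \<subseteq> \<sigma> ` S_set m" using X_sub[OF y] by blast
  hence "\<sigma> ` y \<subseteq> S_set m" using permutes_image[OF stab_perm[OF s]] by simp
  moreover have "card (\<sigma> ` y) = card y"
    using card_image[OF inj_on_subset[OF stab_inj[OF s]]] by blast
  ultimately show ?thesis using y unfolding X_set_def by simp
qed

lemma stab_inv: assumes s: "\<sigma> \<in> stab m" shows "inv \<sigma> \<in> stab m"
proof -
  have p: "inv \<sigma> permutes S_set m" using permutes_inv[OF stab_perm[OF s]] .
  have "inv \<sigma> ` x0 m = inv \<sigma> ` (\<sigma> ` x0 m)" using stab_x0[OF s] by simp
  also have "\<dots> = x0 m" using permutes_inverses(2)[OF stab_perm[OF s]] by (simp add: image_comp)
  finally show ?thesis using p unfolding stab_def by blast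
qed

lemma stab_bij: assumes s: "\<sigma> \<in> stab m" shows "bij_betw (\<lambda>w. \<sigma> ` w) (X_set m) (X_set m)"
proof (rule bij_betw_imageI)
  show "inj_on (\<lambda>w. \<sigma> ` w) (X_set m)"
    using inj_image_eq_iff[OF stab_inj[OF s]] by (auto intro: inj_onI)
  show "(\<lambda>w. \<sigma> ` w) ` X_set m = X_set m"
  proof
    show "(\<lambda>w. \<sigma> ` w) ` X_set m \<subseteq> X_set m" using stab_X[OF s] by blast
    show "X_set m \<subseteq> (\<lambda>w. \<sigma> ` w) ` X_set m"
    proof
      fix y assume y: "y \<in> X_set m"
      have "inv \<sigma> ` y \<in> X_set m" using stab_X[OF stab_inv[OF s] y] .
      moreover have "\<sigma> ` (inv \<sigma> ` y) = y"
        using permutes_inverses(1)[OF stab_perm[OF s]] by (simp add: image_comp)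
      ultimately show "y \<in> (\<lambda>w. \<sigma> ` w) ` X_set m" by (metis image_eqI)
    qed
  qed
qed

lemma stab_dist: assumes s: "\<sigma> \<in> stab m" and y: "y \<in> X_set m"
  shows "dist_O m (x0 m) (\<sigma> ` y) = dist_O m (x0 m) y"
proof -
  have i: "inj \<sigma>" using stab_inj[OF s] .
  have "sd (x0 m) (\<sigma> ` y) = \<sigma> ` sd (x0 m) y"
    using stab_x0[OF s] i unfolding sd_def by (metis image_Un image_set_diff)
  hence "card (sd (x0 m) (\<sigma> ` y)) = card (sd (x0 m) y)"
    using card_image[OF inj_on_subset[OF i]] by simp
  thus ?thesis using dist_sd[OF x0_X y] dist_sd[OF x0_X stab_X[OF s y]] by simp
qed

lemma stab_adj: assumes s: "\<sigma> \<in> stab m" and y: "y \<in> X_set m" and z: "z \<in> X_set m"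
  shows "adj m (\<sigma> ` y) (\<sigma> ` z) = adj m y z"
proof -
  have i: "inj \<sigma>" using stab_inj[OF s] .
  have "(\<sigma> ` y \<subset> \<sigma> ` z) = (y \<subset> z)" "(\<sigma> ` z \<subset> \<sigma> ` y) = (z \<subset> y)"
    using inj_image_subset_iff[OF i] inj_image_eq_iff[OF i] by (auto simp: psubset_eq)
  thus ?thesis using y z stab_X[OF s y] stab_X[OF s z] unfolding adj_def by simp
qed

lemma stab_eq: "\<sigma> \<in> stab m \<Longrightarrow> (\<sigma> ` y = \<sigma> ` z) = (y = z)"
  using inj_image_eq_iff[OF stab_inj] by blast

lemma T_sub_A: "B \<in> terwilliger m \<Longrightarrow> B \<in> centralizer m"
proof (induction rule: terwilliger.induct)
  case gen_one
  show ?case unfolding centralizer_def is_mat_def mat_one_def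
    using stab_X stab_eq by auto
next
  case gen_adj
  show ?case unfolding centralizer_def is_mat_def adj_mat_def
    using stab_adj by (auto simp: adj_def)
next
  case (gen_dual i)
  show ?case unfolding centralizer_def is_mat_def dual_idem_def
    using stab_X stab_eq stab_dist by auto
next
  case (cl_add B C)
  thus ?case unfolding centralizer_def is_mat_def mat_add_def by auto
next
  case (cl_smult B c)
  thus ?case unfolding centralizer_def is_mat_def mat_smult_def by auto
next
  case (cl_mult B C)
  have "mat_mult m B C (\<sigma> ` y) (\<sigma> ` z) = mat_mult m B C y z"
    if s: "\<sigma> \<in> stab m" and y: "y \<in> X_set m" and z: "z \<in> X_set m" for \<sigma> y z
  proof -
    have "(\<Sum>w\<in>X_set m. B (\<sigma> ` y) w * C w (\<sigma> ` z))
        = (\<Sum>w\<in>X_set m. B (\<sigma> ` y) (\<sigma> ` w) * C (\<sigma> ` w) (\<sigma> ` z))"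
      using sum.reindex_bij_betw[OF stab_bij[OF s], of "\<lambda>w. B (\<sigma> ` y) w * C w (\<sigma> ` z)"] by simp
    also have "\<dots> = (\<Sum>w\<in>X_set m. B y w * C w z)"
      using cl_mult.IH s y z unfolding centralizer_def by (intro sum.cong) auto
    finally show ?thesis unfolding mat_mult_def using stab_X[OF s y] stab_X[OF s z] y z by simp
  qed
  thus ?case unfolding centralizer_def is_mat_def by (auto simp: mat_mult_def)
qed

definition KK :: "nat \<Rightarrow> (bool \<times> bool \<times> bool \<Rightarrow> nat) set" where
  "KK m = (\<lambda>p. FF m (fst p) (snd p)) ` (X_set m \<times> X_set m)"

definition MM :: "nat \<Rightarrow> (bool \<times> bool \<times> bool \<Rightarrow> nat) \<Rightarrow> cmat" where
  "MM m k = (\<lambda>y z. if y \<in> X_set m \<and> z \<in> X_set m \<and> FF m y z = k then 1 else 0)"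

definition rep :: "nat \<Rightarrow> (bool \<times> bool \<times> bool \<Rightarrow> nat) \<Rightarrow> nat set \<times> nat set" where
  "rep m k = (SOME p. p \<in> X_set m \<times> X_set m \<and> FF m (fst p) (snd p) = k)"

definition delta :: "(bool \<times> bool \<times> bool \<Rightarrow> nat) \<Rightarrow> nat" where
  "delta k = k (True,True,False) + k (True,False,True) + k (False,True,False) + k (False,False,True)"

lemma finite_KK: "finite (KK m)" unfolding KK_def by simp

lemma KK_I: "y \<in> X_set m \<Longrightarrow> z \<in> X_set m \<Longrightarrow> FF m y z \<in> KK m"
  unfolding KK_def by (rule image_eqI[where x="(y,z)"]) auto

lemma KK_E: assumes "k \<in> KK m" obtains y z where "y \<in> X_set m" "z \<in> X_set m" "FF m y z = k"
  using assms unfolding KK_def by auto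

lemma rep_prop: assumes "k \<in> KK m"
  shows "fst (rep m k) \<in> X_set m" "snd (rep m k) \<in> X_set m" "FF m (fst (rep m k)) (snd (rep m k)) = k"
proof -
  obtain y z where "y \<in> X_set m" "z \<in> X_set m" "FF m y z = k" using assms by (rule KK_E)
  hence "\<exists>p. p \<in> X_set m \<times> X_set m \<and> FF m (fst p) (snd p) = k" by (intro exI[where x="(y,z)"]) simp
  hence "rep m k \<in> X_set m \<times> X_set m \<and> FF m (fst (rep m k)) (snd (rep m k)) = k"
    unfolding rep_def by (rule someI_ex)
  thus "fst (rep m k) \<in> X_set m" "snd (rep m k) \<in> X_set m" "FF m (fst (rep m k)) (snd (rep m k)) = k"
    by (auto simp: mem_Times_iff)
qed

lemma delta_sd: "y \<in> X_set m \<Longrightarrow> z \<in> X_set m \<Longrightarrow> delta (FF m y z) = card (sd y z)"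
  unfolding delta_def using Fsd[OF X_sub X_sub] by simp

lemma cent_rep:
  assumes B: "B \<in> centralizer m" and y: "y \<in> X_set m" and z: "z \<in> X_set m"
  shows "B (fst (rep m (FF m y z))) (snd (rep m (FF m y z))) = B y z"
proof -
  let ?k = "FF m y z"
  have k: "?k \<in> KK m" using KK_I[OF y z] .
  note r = rep_prop[OF k]
  obtain \<sigma> where s: "\<sigma> \<in> stab m" "\<sigma> ` fst (rep m ?k) = y" "\<sigma> ` snd (rep m ?k) = z"
    using orbit[OF X_sub[OF r(1)] X_sub[OF r(2)] X_sub[OF y] X_sub[OF z] r(3)] by blast
  have "B (\<sigma> ` fst (rep m ?k)) (\<sigma> ` snd (rep m ?k)) = B (fst (rep m ?k)) (snd (rep m ?k))"
    using B s(1) r(1) r(2) unfolding centralizer_def by blast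
  thus ?thesis using s by simp
qed

lemma expand:
  assumes B: "B \<in> centralizer m"
  shows "B = (\<lambda>y z. \<Sum>k\<in>KK m. B (fst (rep m k)) (snd (rep m k)) * MM m k y z)"
proof (intro ext)
  fix y z
  show "B y z = (\<Sum>k\<in>KK m. B (fst (rep m k)) (snd (rep m k)) * MM m k y z)"
  proof (cases "y \<in> X_set m \<and> z \<in> X_set m")
    case True
    have "(\<Sum>k\<in>KK m. B (fst (rep m k)) (snd (rep m k)) * MM m k y z)
        = (\<Sum>k\<in>KK m. if FF m y z = k then B (fst (rep m k)) (snd (rep m k)) else 0)"
      using True by (intro sum.cong) (auto simp: MM_def)
    also have "\<dots> = B (fst (rep m (FF m y z))) (snd (rep m (FF m y z)))"
      using KK_I[of y m z] True finite_KK[of m] by simp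
    also have "\<dots> = B y z" using cent_rep[OF B] True by blast
    finally show ?thesis by simp
  next
    case False
    hence "B y z = 0" using B unfolding centralizer_def is_mat_def by blast
    moreover have "MM m k y z = 0" for k using False unfolding MM_def by auto
    ultimately show ?thesis by simp
  qed
qed

lemma zero_T: "(\<lambda>y z. 0) \<in> terwilliger m"
proof -
  have "mat_smult 0 (mat_one m) = (\<lambda>y z. 0)" by (simp add: mat_smult_def)
  moreover have "mat_smult 0 (mat_one m) \<in> terwilliger m" by (rule terwilliger.cl_smult[OF terwilliger.gen_one])
  ultimately show ?thesis by simp
qed

lemma msum_T:
  assumes "finite A" "\<And>k. k \<in> A \<Longrightarrow> f k \<in> terwilliger m"
  shows "(\<lambda>y z. \<Sum>k\<in>A. f k y z) \<in> terwilliger m"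
  using assms
proof (induction A rule: finite_induct)
  case empty thus ?case using zero_T by simp
next
  case (insert a A)
  have "(\<lambda>y z. \<Sum>k\<in>insert a A. f k y z) = mat_add (f a) (\<lambda>y z. \<Sum>k\<in>A. f k y z)"
    using insert.hyps by (simp add: mat_add_def)
  thus ?case using terwilliger.cl_add insert by simp
qed

lemma smult_T: "B \<in> terwilliger m \<Longrightarrow> (\<lambda>y z. c * B y z) \<in> terwilliger m"
  using terwilliger.cl_smult[of B m c] by (simp add: mat_smult_def)

lemma dist_le: "y \<in> X_set m \<Longrightarrow> dist_O m (x0 m) y \<le> 2*m+1"
  using dist_x0[of y m] Gx[of m y] Gc[of m y] by simp

lemma adj_cmp: "adj m w z \<Longrightarrow> w \<subseteq> z \<or> z \<subseteq> w" by (auto simp: adj_def)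

lemma GG_mono: assumes "w \<subseteq> z" shows "GG m w (c0,True) \<le> GG m z (c0,True)"
  unfolding GG_def by (rule card_mono) (use assms in auto)

lemma part_eq:
  assumes wz: "w \<subseteq> z" and eq: "GG m w (c0,True) = GG m z (c0,True)"
  shows "\<forall>x\<in>S_set m. (x \<in> x0 m \<longleftrightarrow> c0) \<longrightarrow> (x \<in> w \<longleftrightarrow> x \<in> z)"
proof -
  let ?A = "{x \<in> S_set m. (x \<in> x0 m, x \<in> w) = (c0,True)}"
  let ?B = "{x \<in> S_set m. (x \<in> x0 m, x \<in> z) = (c0,True)}"
  have "?A \<subseteq> ?B" using wz by auto
  moreover have "finite ?B" by simp
  moreover have "card ?A = card ?B" using eq unfolding GG_def .
  ultimately have "?A = ?B" using card_subset_eq by blast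
  thus ?thesis using wz by blast
qed

lemma adj_agree:
  assumes "adj m w z" "GG m w (c0,True) = GG m z (c0,True)"
  shows "\<forall>x\<in>S_set m. (x \<in> x0 m \<longleftrightarrow> c0) \<longrightarrow> (x \<in> w \<longleftrightarrow> x \<in> z)"
proof (cases "w \<subseteq> z")
  case True thus ?thesis using part_eq assms(2) by blast
next
  case False
  hence "z \<subseteq> w" using adj_cmp[OF assms(1)] by blast
  thus ?thesis using part_eq[of z w m c0] assms(2) by auto
qed

lemma adj_one:
  assumes a: "adj m w z"
  shows "GG m w (True,True) = GG m z (True,True) \<or> GG m w (False,True) = GG m z (False,True)"
proof -
  have X: "w \<in> X_set m" "z \<in> X_set m" using a by (auto simp: adj_def)
  have f: "finite w" "finite z" using X X_fin by auto
  have cw: "card w = GG m w (True,True) + GG m w (False,True)" using Gcard[OF X_sub[OF X(1)]] .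
  have cz: "card z = GG m z (True,True) + GG m z (False,True)" using Gcard[OF X_sub[OF X(2)]] .
  have "card (sd w z) = 1" using adj_sd[OF a] .
  { assume s: "w \<subset> z"
    have "card w < card z" using psubset_card_mono[OF f(2) s] .
    hence "card z = card w + 1" using X_card[OF X(1)] X_card[OF X(2)] by auto
    moreover have "GG m w (True,True) \<le> GG m z (True,True)" "GG m w (False,True) \<le> GG m z (False,True)"
      using GG_mono s by auto
    ultimately have ?thesis using cw cz by linarith }
  moreover
  { assume s: "z \<subset> w"
    have "card z < card w" using psubset_card_mono[OF f(1) s] .
    hence "card w = card z + 1" using X_card[OF X(1)] X_card[OF X(2)] by auto
    moreover have "GG m z (True,True) \<le> GG m w (True,True)" "GG m z (False,True) \<le> GG m w (False,True)"
      using GG_mono s by auto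
    ultimately have ?thesis using cw cz by linarith }
  ultimately show ?thesis using a unfolding adj_def by blast
qed

lemma FF_agree:
  assumes "\<forall>x\<in>S_set m. (x \<in> x0 m \<longleftrightarrow> c0) \<longrightarrow> (x \<in> w \<longleftrightarrow> x \<in> z)"
  shows "FF m y z (c0,c1,c2) = FF m y w (c0,c1,c2)"
proof -
  have "{x \<in> S_set m. (x \<in> x0 m, x \<in> y, x \<in> z) = (c0,c1,c2)} = {x \<in> S_set m. (x \<in> x0 m, x \<in> y, x \<in> w) = (c0,c1,c2)}"
    using assms by auto
  thus ?thesis unfolding FF_def by simp
qed

lemma FF_ext:
  fixes f g :: "bool \<times> bool \<times> bool \<Rightarrow> 'a"
  assumes "\<And>c0 c1 c2. f (c0,c1,c2) = g (c0,c1,c2)" shows "f = g"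
proof
  fix c :: "bool \<times> bool \<times> bool"
  obtain c0 c1 c2 where "c = (c0,c1,c2)" by (cases c) auto
  thus "f c = g c" using assms by simp
qed

lemma rigid:
  assumes yX: "y \<in> X_set m" and zX: "z \<in> X_set m" and y'X: "y' \<in> X_set m" and z'X: "z' \<in> X_set m"
    and a: "adj m w z" and a': "adj m w' z'" and F: "FF m y' w' = FF m y w"
    and Gz: "\<And>c. GG m z' c = GG m z c" and sdq: "card (sd y' z') = card (sd y z)"
  shows "FF m y' z' = FF m y z"
proof -
  have gy: "GG m y' c = GG m y c" for c
  proof -
    obtain c0 c1 where c: "c = (c0,c1)" by (cases c)
    show ?thesis unfolding c using FG1[of m y' w' c0 c1, symmetric] FG1[of m y w c0 c1, symmetric] F by simp
  qed
  have gw: "GG m w' c = GG m w c" for c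
  proof -
    obtain c0 c1 where c: "c = (c0,c1)" by (cases c)
    show ?thesis unfolding c using FG2[of m y' w' c0 c1, symmetric] FG2[of m y w c0 c1, symmetric] F by simp
  qed
  have sd1: "card (sd y z) = FF m y z (True,True,False) + FF m y z (True,False,True)
     + FF m y z (False,True,False) + FF m y z (False,False,True)" using Fsd[OF X_sub[OF yX] X_sub[OF zX]] .
  have sd2: "card (sd y' z') = FF m y' z' (True,True,False) + FF m y' z' (True,False,True)
     + FF m y' z' (False,True,False) + FF m y' z' (False,False,True)" using Fsd[OF X_sub[OF y'X] X_sub[OF z'X]] .
  have A1: "FF m y z (c0,c1,True) + FF m y z (c0,c1,False) = GG m y (c0,c1)" for c0 c1 by (rule FG1)
  have A2: "FF m y' z' (c0,c1,True) + FF m y' z' (c0,c1,False) = GG m y (c0,c1)" for c0 c1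
    using FG1[of m y' z' c0 c1] gy by simp
  have B1: "FF m y z (c0,True,c2) + FF m y z (c0,False,c2) = GG m z (c0,c2)" for c0 c2 by (rule FG2)
  have B2: "FF m y' z' (c0,True,c2) + FF m y' z' (c0,False,c2) = GG m z (c0,c2)" for c0 c2
    using FG2[of m y' z' c0 c2] Gz by simp
  have cell: "FF m y' z' (b,c1,c2) = FF m y z (b,c1,c2)"
    if ag: "GG m w (b,True) = GG m z (b,True)" for b c1 c2
  proof -
    have ag': "GG m w' (b,True) = GG m z' (b,True)" using ag gw Gz by simp
    have "FF m y' z' (b,c1,c2) = FF m y' w' (b,c1,c2)" using FF_agree[OF adj_agree[OF a' ag']] .
    also have "\<dots> = FF m y w (b,c1,c2)" using F by simp
    also have "\<dots> = FF m y z (b,c1,c2)" using FF_agree[OF adj_agree[OF a ag]] by simp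
    finally show ?thesis .
  qed
  show ?thesis
  proof (cases "GG m w (True,True) = GG m z (True,True)")
    case True
    note c = cell[OF True]
    have e1: "FF m y' z' (False,True,False) + FF m y' z' (False,False,True)
        = FF m y z (False,True,False) + FF m y z (False,False,True)"
      using sd1 sd2 sdq c[of True False] c[of False True] by linarith
    show ?thesis
    proof (rule FF_ext)
      fix c0 c1 c2 show "FF m y' z' (c0,c1,c2) = FF m y z (c0,c1,c2)"
      proof (cases c0)
        case True thus ?thesis using c by simp
      next
        case False
        have q0: "FF m y' z' (False,True,True) = FF m y z (False,True,True)"
          using e1 A1[of False True] A1[of False False] A2[of False True] A2[of False False]
            B1[of False True] B1[of False False] B2[of False True] B2[of False False] by linarith
        have q1: "FF m y' z' (False,True,False) = FF m y z (False,True,False)"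
          using e1 A1[of False True] A1[of False False] A2[of False True] A2[of False False]
            B1[of False True] B1[of False False] B2[of False True] B2[of False False] by linarith
        have q2: "FF m y' z' (False,False,True) = FF m y z (False,False,True)"
          using e1 A1[of False True] A1[of False False] A2[of False True] A2[of False False]
            B1[of False True] B1[of False False] B2[of False True] B2[of False False] by linarith
        have q3: "FF m y' z' (False,False,False) = FF m y z (False,False,False)"
          using e1 A1[of False True] A1[of False False] A2[of False True] A2[of False False]
            B1[of False True] B1[of False False] B2[of False True] B2[of False False] by linarith
        have "FF m y' z' (False,c1,c2) = FF m y z (False,c1,c2)"
          by (cases c1; cases c2) (simp_all add: q0 q1 q2 q3)
        thus ?thesis using False by simp
      qed
    qed
  next
    case False
    hence ag: "GG m w (False,True) = GG m z (False,True)" using adj_one[OF a] by blast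
    note c = cell[OF ag]
    have e1: "FF m y' z' (True,True,False) + FF m y' z' (True,False,True)
        = FF m y z (True,True,False) + FF m y z (True,False,True)"
      using sd1 sd2 sdq c[of True False] c[of False True] by linarith
    show ?thesis
    proof (rule FF_ext)
      fix c0 c1 c2 show "FF m y' z' (c0,c1,c2) = FF m y z (c0,c1,c2)"
      proof (cases c0)
        case False thus ?thesis using c by simp
      next
        case True
        have q0: "FF m y' z' (True,True,True) = FF m y z (True,True,True)"
          using e1 A1[of True True] A1[of True False] A2[of True True] A2[of True False]
            B1[of True True] B1[of True False] B2[of True True] B2[of True False] by linarith
        have q1: "FF m y' z' (True,True,False) = FF m y z (True,True,False)"
          using e1 A1[of True True] A1[of True False] A2[of True True] A2[of True False]
            B1[of True True] B1[of True False] B2[of True True] B2[of True False] by linarith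
        have q2: "FF m y' z' (True,False,True) = FF m y z (True,False,True)"
          using e1 A1[of True True] A1[of True False] A2[of True True] A2[of True False]
            B1[of True True] B1[of True False] B2[of True True] B2[of True False] by linarith
        have q3: "FF m y' z' (True,False,False) = FF m y z (True,False,False)"
          using e1 A1[of True True] A1[of True False] A2[of True True] A2[of True False]
            B1[of True True] B1[of True False] B2[of True True] B2[of True False] by linarith
        have "FF m y' z' (True,c1,c2) = FF m y z (True,c1,c2)"
          by (cases c1; cases c2) (simp_all add: q0 q1 q2 q3)
        thus ?thesis using True by simp
      qed
    qed
  qed
qed

lemma inner_formula:
  assumes y: "y \<in> X_set m" and w: "w \<in> X_set m"
  shows "mat_mult m (MM m k) (adj_mat m) y w = of_nat (card {u \<in> X_set m. FF m y u = k \<and> adj m u w})"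
proof -
  have "mat_mult m (MM m k) (adj_mat m) y w = (\<Sum>u\<in>X_set m. MM m k y u * adj_mat m u w)"
    using y w by (simp add: mat_mult_def)
  also have "\<dots> = (\<Sum>u\<in>X_set m. of_bool (FF m y u = k \<and> adj m u w))"
    using y w by (intro sum.cong) (auto simp: MM_def adj_mat_def)
  also have "\<dots> = of_nat (card (X_set m \<inter> {u. FF m y u = k \<and> adj m u w}))"
    using finite_X[of m] by simp
  also have "X_set m \<inter> {u. FF m y u = k \<and> adj m u w} = {u \<in> X_set m. FF m y u = k \<and> adj m u w}" by blast
  finally show ?thesis .
qed

lemma P_formula:
  "mat_mult m (mat_mult m (MM m k) (adj_mat m)) (dual_idem m D) y z =
    (if y \<in> X_set m \<and> z \<in> X_set m \<and> dist_O m (x0 m) z = D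
     then of_nat (card {u \<in> X_set m. FF m y u = k \<and> adj m u z}) else 0)"
proof (cases "y \<in> X_set m \<and> z \<in> X_set m")
  case True
  let ?Q = "mat_mult m (MM m k) (adj_mat m)"
  have "mat_mult m ?Q (dual_idem m D) y z = (\<Sum>w\<in>X_set m. ?Q y w * dual_idem m D w z)"
    using True by (simp add: mat_mult_def)
  also have "\<dots> = (\<Sum>w\<in>X_set m. if w = z then ?Q y z * (if dist_O m (x0 m) z = D then 1 else 0) else 0)"
    by (intro sum.cong) (auto simp: dual_idem_def)
  also have "\<dots> = ?Q y z * (if dist_O m (x0 m) z = D then 1 else 0)"
    using True by simp
  finally show ?thesis using True inner_formula by simp
next
  case False thus ?thesis unfolding mat_mult_def by auto
qed

lemma M_in_T: "\<forall>k\<in>KK m. delta k = n \<longrightarrow> MM m k \<in> terwilliger m"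
proof (induction n rule: less_induct)
  case (less n)
  show ?case
  proof (intro ballI impI)
    fix k assume kK: "k \<in> KK m" and dk: "delta k = n"
    obtain y z where yX: "y \<in> X_set m" and zX: "z \<in> X_set m" and k: "FF m y z = k"
      using kK by (rule KK_E)
    have sdn: "card (sd y z) = n" using delta_sd[OF yX zX] k dk by simp
    show "MM m k \<in> terwilliger m"
    proof (cases "n = 0")
      case True
      hence yz: "y = z" using sdn sd_empty[of y z] sd_fin[OF X_fin[OF yX] X_fin[OF zX]] by simp
      let ?D = "dist_O m (x0 m) y"
      have "MM m k = dual_idem m ?D"
      proof (intro ext)
        fix y' z'
        have "(y' \<in> X_set m \<and> z' \<in> X_set m \<and> FF m y' z' = FF m y y) \<longleftrightarrow>
              (y' \<in> X_set m \<and> y' = z' \<and> dist_O m (x0 m) y' = ?D)"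
        proof
          assume h: "y' \<in> X_set m \<and> z' \<in> X_set m \<and> FF m y' z' = FF m y y"
          have "card (sd y' z') = delta (FF m y y)" using delta_sd[of y' m z'] h by simp
          also have "\<dots> = 0" unfolding delta_def Fdiag by simp
          finally have e: "y' = z'" using sd_empty[of y' z'] sd_fin[OF X_fin X_fin] h by auto
          have "GG m y' c = GG m y c" for c
          proof -
            obtain c0 c1 where c: "c = (c0,c1)" by (cases c)
            have "FF m y' y' (c0,c1,c1) = FF m y y (c0,c1,c1)" using h e by simp
            thus ?thesis unfolding c Fdiag by simp
          qed
          hence "dist_O m (x0 m) y' = ?D" using dist_x0 h yX by simp
          thus "y' \<in> X_set m \<and> y' = z' \<and> dist_O m (x0 m) y' = ?D" using h e by simp
        next
          assume h: "y' \<in> X_set m \<and> y' = z' \<and> dist_O m (x0 m) y' = ?D"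
          have g: "GG m y' c = GG m y c" for c using lev_eq[of y' m y c] h yX by blast
          have "FF m y' y' = FF m y y" by (rule FF_ext) (simp add: Fdiag g)
          thus "y' \<in> X_set m \<and> z' \<in> X_set m \<and> FF m y' z' = FF m y y" using h by auto
        qed
        thus "MM m k y' z' = dual_idem m ?D y' z'"
          unfolding MM_def dual_idem_def using k yz by simp
      qed
      thus ?thesis using terwilliger.gen_dual[OF dist_le[OF yX]] by simp
    next
      case False
      hence "y \<noteq> z" using sdn sd_self[of y] by auto
      then obtain w where wX: "w \<in> X_set m" and a: "adj m w z" and sw: "card (sd y w) + 1 = card (sd y z)"
        using step_exists[OF yX zX] by blast
      let ?k' = "FF m y w"
      let ?D = "dist_O m (x0 m) z"
      have k'K: "?k' \<in> KK m" using KK_I[OF yX wX] .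
      have dk': "delta ?k' < n" using delta_sd[OF yX wX] sw sdn by simp
      have Mk': "MM m ?k' \<in> terwilliger m" using less.IH[OF dk'] k'K by blast
      let ?P = "mat_mult m (mat_mult m (MM m ?k') (adj_mat m)) (dual_idem m ?D)"
      have PT: "?P \<in> terwilliger m"
        using terwilliger.cl_mult[OF terwilliger.cl_mult[OF Mk' terwilliger.gen_adj] terwilliger.gen_dual[OF dist_le[OF zX]]] .
      have PA: "?P \<in> centralizer m" using T_sub_A[OF PT] .
      define cc where "cc k'' = ?P (fst (rep m k'')) (snd (rep m k''))" for k''
      have Pexp: "?P = (\<lambda>y z. \<Sum>k''\<in>KK m. cc k'' * MM m k'' y z)"
        unfolding cc_def by (rule expand[OF PA])
      have cck: "cc k = ?P y z" unfolding cc_def using cent_rep[OF PA yX zX] k by simp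
      have "w \<in> {u \<in> X_set m. FF m y u = ?k' \<and> adj m u z}" using wX a by simp
      moreover have "finite {u \<in> X_set m. FF m y u = ?k' \<and> adj m u z}" by simp
      ultimately have "card {u \<in> X_set m. FF m y u = ?k' \<and> adj m u z} \<noteq> 0" by auto
      hence c0: "cc k \<noteq> 0" unfolding cck P_formula using yX zX by simp
      have other: "delta k'' < n" if k''K: "k'' \<in> KK m" and ne: "k'' \<noteq> k" and cnz: "cc k'' \<noteq> 0" for k''
      proof -
        note r = rep_prop[OF k''K]
        let ?y' = "fst (rep m k'')" and ?z' = "snd (rep m k'')"
        have "?P ?y' ?z' \<noteq> 0" using cnz unfolding cc_def .
        hence dz: "dist_O m (x0 m) ?z' = ?D" and
          cne: "card {u \<in> X_set m. FF m ?y' u = ?k' \<and> adj m u ?z'} \<noteq> 0"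
          unfolding P_formula by (auto split: if_splits)
        then obtain w' where w'X: "w' \<in> X_set m" and F': "FF m ?y' w' = ?k'" and a': "adj m w' ?z'"
          by (metis (mono_tags, lifting) Collect_empty_eq card.empty)
        have "card (sd ?y' ?z') \<le> card (sd ?y' w') + card (sd w' ?z')"
          using card_sd_tri[OF X_fin[OF r(1)] X_fin[OF r(2)] X_fin[OF w'X]] .
        moreover have "card (sd ?y' w') = card (sd y w)"
          using delta_sd[OF r(1) w'X] delta_sd[OF yX wX] F' by simp
        moreover have "card (sd w' ?z') = 1" using adj_sd[OF a'] .
        ultimately have le: "card (sd ?y' ?z') \<le> n" using sw sdn by simp
        have "card (sd ?y' ?z') \<noteq> n"
        proof
          assume eqn: "card (sd ?y' ?z') = n"
          have Gz: "GG m ?z' c = GG m z c" for c using lev_eq[OF r(2) zX dz] .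
          have "FF m ?y' ?z' = FF m y z"
            by (rule rigid[OF yX zX r(1) r(2) a a' F' Gz]) (use eqn sdn in simp)
          thus False using r(3) k ne by simp
        qed
        thus ?thesis using le delta_sd[OF r(1) r(2)] r(3) by simp
      qed
      define R where "R = (\<lambda>y z. \<Sum>k''\<in>KK m - {k}. cc k'' * MM m k'' y z)"
      have RT: "R \<in> terwilliger m" unfolding R_def
      proof (rule msum_T)
        show "finite (KK m - {k})" using finite_KK by simp
        fix k'' assume k'': "k'' \<in> KK m - {k}"
        show "(\<lambda>y z. cc k'' * MM m k'' y z) \<in> terwilliger m"
        proof (cases "cc k'' = 0")
          case True thus ?thesis using zero_T by simp
        next
          case False
          hence "delta k'' < n" using other k'' by blast
          hence "MM m k'' \<in> terwilliger m" using less.IH k'' by blast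
          thus ?thesis by (rule smult_T)
        qed
      qed
      have eq: "MM m k = mat_smult (1 / cc k) (mat_add ?P (mat_smult (-1) R))"
      proof (intro ext)
        fix y' z'
        have "?P y' z' = cc k * MM m k y' z' + R y' z'"
          unfolding R_def by (subst Pexp) (simp add: sum.remove[OF finite_KK kK])
        thus "MM m k y' z' = mat_smult (1 / cc k) (mat_add ?P (mat_smult (-1) R)) y' z'"
          unfolding mat_smult_def mat_add_def using c0 by (simp add: field_simps)
      qed
      show ?thesis unfolding eq
        by (intro terwilliger.cl_smult terwilliger.cl_add PT RT)
    qed
  qed
qed

theorem theorem4p11:
  fixes m :: nat
  assumes "m \<ge> 3"
  shows "terwilliger m = centralizer m"
proof
  show "terwilliger m \<subseteq> centralizer m" using T_sub_A by blast
  show "centralizer m \<subseteq> terwilliger m"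
  proof
    fix B assume B: "B \<in> centralizer m"
    have "(\<lambda>y z. \<Sum>k\<in>KK m. B (fst (rep m k)) (snd (rep m k)) * MM m k y z) \<in> terwilliger m"
    proof (rule msum_T[OF finite_KK])
      fix k assume "k \<in> KK m"
      hence "MM m k \<in> terwilliger m" using M_in_T by blast
      thus "(\<lambda>y z. B (fst (rep m k)) (snd (rep m k)) * MM m k y z) \<in> terwilliger m" by (rule smult_T)
    qed
    thus "B \<in> terwilliger m" using expand[OF B] by simp
  qed
qed

end
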